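(* Let $B^\bullet=(B^{-1}\xrightarrow{d}B^0)$ and $G^\bullet=(G^{-1}\xrightarrow{d}G^0)$ be crossed modules and $\pi,\pi':B^\bullet\to G^\bullet$ homomorphisms of crossed modules. Let the strict 2-group $\mathfrak B=\operatorname{Cone}(B^\bullet)$ act on the underlying groupoid $\mathscr X$ of $\mathfrak G=\operatorname{Cone}(G^\bullet)$ via $x\mapsto \pi(b)\,x\,\pi'(b)^{-1}$. Identify $\pi_1(\mathfrak B)=H^{-1}(B^\bullet):=\operatorname{Ker}(B^{-1}\xrightarrow{d}B^0)$ and, for each $g\in G^0$, $\operatorname{Aut}_{\mathscr X}g=H^{-1}(G^\bullet):=\operatorname{Ker}(G^{-1}\xrightarrow{d}G^0)$. Then the homomorphism $\phi_g:H^{-1}(B^\bullet)\to H^{-1}(G^\bullet)$ induced by the action is $$\phi_g(\beta)=\pi(\beta)\cdot{}^{g}\pi'(\beta)^{-1}={}^{g}\pi'(\beta)^{-1}\cdot\pi(\beta),\qquad \beta\in H^{-1}(B^\bullet).$$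
   Context: A crossed module $G^\bullet$ consists of groups $G^0,G^{-1}$, an action of $G^0$ on $G^{-1}$ written $\gamma\mapsto{}^g\gamma$, and a homomorphism $d:G^{-1}\to G^0$ with $d({}^g\gamma)=g\,d(\gamma)g^{-1}$ and ${}^{d(\gamma)}\gamma'=\gamma\gamma'\gamma^{-1}$. A homomorphism of crossed modules is a pair of group homomorphisms in degrees $0$ and $-1$ commuting with $d$ and compatible with the actions. $\operatorname{Cone}(G^{-1}\xrightarrow{d}G^0)$ is the strict 2-group whose objects are the elements of $G^0$, with $\operatorname{Mor}(g,g')=\{\gamma\in G^{-1}: d(\gamma)g=g'\}$, composition given by multiplication in $G^{-1}$, tensor product of objects by multiplication in $G^0$, and tensor product of morphisms $\operatorname{Mor}(g_1,g_1')\times\operatorname{Mor}(g_2,g_2')\to\operatorname{Mor}(g_1g_2,g_1'g_2')$ given by $(\gamma_1,\gamma_2)\mapsto\gamma_1\cdot{}^{g_1}\gamma_2$. The pair $(\pi,\pi')$ gives a homomorphism of strict 2-groups $\mathfrak B\to\mathfrak G\times\mathfrak G$, and $\mathfrak G\times\mathfrak G$ acts on $\mathscr X$ by $(g,g')\cdot x=g\,x\,(g')^{-1}$. For a 2-group $\mathscr G$ acting on a groupoid $\mathscr X$, $\pi_1(\mathscr G)=\operatorname{Aut}(1_{\mathscr G})$, and $\phi_x:\pi_1(\mathscr G)\to\operatorname{Aut}_{\mathscr X}x$ sends an automorphism of the unit object to the induced automorphism of $1_{\mathscr G}\cdot x=x$. *)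

theory Defs
  imports "HOL-Algebra.Algebra"
begin

definition crossed_module ::
  "('a, 'm) monoid_scheme \<Rightarrow> ('b, 'n) monoid_scheme \<Rightarrow> ('a \<Rightarrow> 'b \<Rightarrow> 'b) \<Rightarrow> ('b \<Rightarrow> 'a) \<Rightarrow> bool"
where
  "crossed_module G0 G1 act d \<longleftrightarrow>
     group G0 \<and> group G1 \<and> d \<in> hom G1 G0 \<and>
     (\<forall>g\<in>carrier G0. act g \<in> hom G1 G1) \<and>
     (\<forall>\<gamma>\<in>carrier G1. act \<one>\<^bsub>G0\<^esub> \<gamma> = \<gamma>) \<and>
     (\<forall>g\<in>carrier G0. \<forall>h\<in>carrier G0. \<forall>\<gamma>\<in>carrier G1.
         act (g \<otimes>\<^bsub>G0\<^esub> h) \<gamma> = act g (act h \<gamma>)) \<and>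
     (\<forall>g\<in>carrier G0. \<forall>\<gamma>\<in>carrier G1.
         d (act g \<gamma>) = g \<otimes>\<^bsub>G0\<^esub> d \<gamma> \<otimes>\<^bsub>G0\<^esub> inv\<^bsub>G0\<^esub> g) \<and>
     (\<forall>\<gamma>\<in>carrier G1. \<forall>\<gamma>'\<in>carrier G1.
         act (d \<gamma>) \<gamma>' = \<gamma> \<otimes>\<^bsub>G1\<^esub> \<gamma>' \<otimes>\<^bsub>G1\<^esub> inv\<^bsub>G1\<^esub> \<gamma>)"

definition crossed_module_hom ::
  "('a, 'm) monoid_scheme \<Rightarrow> ('b, 'n) monoid_scheme \<Rightarrow> ('a \<Rightarrow> 'b \<Rightarrow> 'b) \<Rightarrow> ('b \<Rightarrow> 'a) \<Rightarrow>
   ('c, 'o) monoid_scheme \<Rightarrow> ('e, 'p) monoid_scheme \<Rightarrow> ('c \<Rightarrow> 'e \<Rightarrow> 'e) \<Rightarrow> ('e \<Rightarrow> 'c) \<Rightarrow>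
   ('a \<Rightarrow> 'c) \<Rightarrow> ('b \<Rightarrow> 'e) \<Rightarrow> bool"
where
  "crossed_module_hom B0 B1 actB dB G0 G1 actG dG f0 f1 \<longleftrightarrow>
     f0 \<in> hom B0 G0 \<and> f1 \<in> hom B1 G1 \<and>
     (\<forall>\<beta>\<in>carrier B1. f0 (dB \<beta>) = dG (f1 \<beta>)) \<and>
     (\<forall>b\<in>carrier B0. \<forall>\<beta>\<in>carrier B1. f1 (actB b \<beta>) = actG (f0 b) (f1 \<beta>))"

text \<open>A morphism of Cone(G) is represented as a pair (g, \<gamma>) of its source object g \<in> G0
  and \<gamma> \<in> G1; its target is d(\<gamma>) g.  The identity of g is (g, 1).\<close>

definition cone_id :: "('b, 'n) monoid_scheme \<Rightarrow> 'a \<Rightarrow> 'a \<times> 'b" where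
  "cone_id G1 g = (g, \<one>\<^bsub>G1\<^esub>)"

definition cone_tensor ::
  "('a, 'm) monoid_scheme \<Rightarrow> ('b, 'n) monoid_scheme \<Rightarrow> ('a \<Rightarrow> 'b \<Rightarrow> 'b) \<Rightarrow>
   'a \<times> 'b \<Rightarrow> 'a \<times> 'b \<Rightarrow> 'a \<times> 'b"
where
  "cone_tensor G0 G1 act m1 m2 =
     (fst m1 \<otimes>\<^bsub>G0\<^esub> fst m2, snd m1 \<otimes>\<^bsub>G1\<^esub> act (fst m1) (snd m2))"

text \<open>Tensor inverse of a morphism \<gamma> : g \<rightarrow> g': the unique morphism g\<inverse> \<rightarrow> g'\<inverse> whose
  tensor product with \<gamma> is the identity of the unit object.\<close>
definition cone_tensor_inv ::
  "('a, 'm) monoid_scheme \<Rightarrow> ('b, 'n) monoid_scheme \<Rightarrow> ('a \<Rightarrow> 'b \<Rightarrow> 'b) \<Rightarrow>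
   'a \<times> 'b \<Rightarrow> 'a \<times> 'b"
where
  "cone_tensor_inv G0 G1 act m =
     (inv\<^bsub>G0\<^esub> (fst m), act (inv\<^bsub>G0\<^esub> (fst m)) (inv\<^bsub>G1\<^esub> (snd m)))"

definition cone_biaction ::
  "('a, 'm) monoid_scheme \<Rightarrow> ('b, 'n) monoid_scheme \<Rightarrow> ('a \<Rightarrow> 'b \<Rightarrow> 'b) \<Rightarrow>
   'a \<times> 'b \<Rightarrow> 'a \<times> 'b \<Rightarrow> 'a \<times> 'b \<Rightarrow> 'a \<times> 'b"
where
  "cone_biaction G0 G1 act m m' n =
     cone_tensor G0 G1 act (cone_tensor G0 G1 act m n) (cone_tensor_inv G0 G1 act m')"

definition cone_map :: "('c \<Rightarrow> 'a) \<Rightarrow> ('e \<Rightarrow> 'b) \<Rightarrow> 'c \<times> 'e \<Rightarrow> 'a \<times> 'b" where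
  "cone_map f0 f1 m = (f0 (fst m), f1 (snd m))"

definition pair_action ::
  "('a, 'm) monoid_scheme \<Rightarrow> ('b, 'n) monoid_scheme \<Rightarrow> ('a \<Rightarrow> 'b \<Rightarrow> 'b) \<Rightarrow>
   ('c \<Rightarrow> 'a) \<Rightarrow> ('e \<Rightarrow> 'b) \<Rightarrow> ('c \<Rightarrow> 'a) \<Rightarrow> ('e \<Rightarrow> 'b) \<Rightarrow>
   'c \<times> 'e \<Rightarrow> 'a \<times> 'b \<Rightarrow> 'a \<times> 'b"
where
  "pair_action G0 G1 actG p0 p1 q0 q1 mb n =
     cone_biaction G0 G1 actG (cone_map p0 p1 mb) (cone_map q0 q1 mb) n"

text \<open>\<phi>_x : \<pi>1(Cone B) = Aut(1) = Ker dB \<rightarrow> Aut(x) = Ker dG: sends an automorphism \<beta> of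
  the unit object to the induced automorphism \<beta> \<cdot> id_x of 1 \<cdot> x = x (its G1-component).\<close>
definition phi ::
  "('c, 'o) monoid_scheme \<Rightarrow>
   ('a, 'm) monoid_scheme \<Rightarrow> ('b, 'n) monoid_scheme \<Rightarrow> ('a \<Rightarrow> 'b \<Rightarrow> 'b) \<Rightarrow>
   ('c \<Rightarrow> 'a) \<Rightarrow> ('e \<Rightarrow> 'b) \<Rightarrow> ('c \<Rightarrow> 'a) \<Rightarrow> ('e \<Rightarrow> 'b) \<Rightarrow> 'a \<Rightarrow> 'e \<Rightarrow> 'b"
where
  "phi B0 G0 G1 actG p0 p1 q0 q1 x \<beta> =
     snd (pair_action G0 G1 actG p0 p1 q0 q1 (\<one>\<^bsub>B0\<^esub>, \<beta>) (cone_id G1 x))"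

end

theory Submission
  imports Defs
begin

theorem lemma2p1:
  fixes B0 :: "('a, 'm) monoid_scheme" and B1 :: "('b, 'n) monoid_scheme"
    and G0 :: "('c, 'o) monoid_scheme" and G1 :: "('e, 'p) monoid_scheme"
  assumes "crossed_module B0 B1 actB dB"
    and "crossed_module G0 G1 actG dG"
    and "crossed_module_hom B0 B1 actB dB G0 G1 actG dG p0 p1"
    and "crossed_module_hom B0 B1 actB dB G0 G1 actG dG q0 q1"
    and "g \<in> carrier G0"
    and "\<beta> \<in> kernel B1 B0 dB"
  shows "phi B0 G0 G1 actG p0 p1 q0 q1 g \<beta>
           = p1 \<beta> \<otimes>\<^bsub>G1\<^esub> actG g (inv\<^bsub>G1\<^esub> (q1 \<beta>))
       \<and> phi B0 G0 G1 actG p0 p1 q0 q1 g \<beta>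
           = actG g (inv\<^bsub>G1\<^esub> (q1 \<beta>)) \<otimes>\<^bsub>G1\<^esub> p1 \<beta>"
proof -
  have gB0: "group B0" and gB1: "group B1" and dBh: "dB \<in> hom B1 B0"
    using assms(1) unfolding crossed_module_def by auto
  have gG0: "group G0" and gG1: "group G1" and dGh: "dG \<in> hom G1 G0"
    and acth: "\<And>h. h \<in> carrier G0 \<Longrightarrow> actG h \<in> hom G1 G1"
    and act1: "\<And>c. c \<in> carrier G1 \<Longrightarrow> actG \<one>\<^bsub>G0\<^esub> c = c"
    and actd: "\<And>c c'. c \<in> carrier G1 \<Longrightarrow> c' \<in> carrier G1 \<Longrightarrow>
         actG (dG c) c' = c \<otimes>\<^bsub>G1\<^esub> c' \<otimes>\<^bsub>G1\<^esub> inv\<^bsub>G1\<^esub> c"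
    using assms(2) unfolding crossed_module_def by auto
  have p0h: "p0 \<in> hom B0 G0" and p1h: "p1 \<in> hom B1 G1"
    and pd: "\<And>b. b \<in> carrier B1 \<Longrightarrow> p0 (dB b) = dG (p1 b)"
    using assms(3) unfolding crossed_module_hom_def by auto
  have q0h: "q0 \<in> hom B0 G0" and q1h: "q1 \<in> hom B1 G1"
    using assms(4) unfolding crossed_module_hom_def by auto
  have bc: "\<beta> \<in> carrier B1" and bk: "dB \<beta> = \<one>\<^bsub>B0\<^esub>"
    using assms(6) unfolding kernel_def by auto
  interpret B0: group B0 by (rule gB0)
  interpret G0: group G0 by (rule gG0)
  interpret G1: group G1 by (rule gG1)
  have p01: "p0 \<one>\<^bsub>B0\<^esub> = \<one>\<^bsub>G0\<^esub>"
    using p0h gB0 gG0 by (simp add: group_hom.hom_one group_hom_axioms_def group_hom_def)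
  have q01: "q0 \<one>\<^bsub>B0\<^esub> = \<one>\<^bsub>G0\<^esub>"
    using q0h gB0 gG0 by (simp add: group_hom.hom_one group_hom_axioms_def group_hom_def)
  have pc: "p1 \<beta> \<in> carrier G1" using p1h bc by (auto simp: hom_def)
  have qc: "q1 \<beta> \<in> carrier G1" using q1h bc by (auto simp: hom_def)
  define x where "x = actG g (inv\<^bsub>G1\<^esub> (q1 \<beta>))"
  have xc: "x \<in> carrier G1" unfolding x_def using acth[OF assms(5)] qc by (auto simp: hom_def)
  have a11: "actG \<one>\<^bsub>G0\<^esub> \<one>\<^bsub>G1\<^esub> = \<one>\<^bsub>G1\<^esub>" using act1 by simp
  have e1: "phi B0 G0 G1 actG p0 p1 q0 q1 g \<beta> = p1 \<beta> \<otimes>\<^bsub>G1\<^esub> x"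
    unfolding phi_def pair_action_def cone_biaction_def cone_map_def cone_tensor_def
      cone_tensor_inv_def cone_id_def x_def
    using p01 q01 a11 pc assms(5) act1[OF G1.inv_closed[OF qc]] by simp
  have dp: "dG (p1 \<beta>) = \<one>\<^bsub>G0\<^esub>" using pd[OF bc] bk p01 by simp
  have "x = p1 \<beta> \<otimes>\<^bsub>G1\<^esub> x \<otimes>\<^bsub>G1\<^esub> inv\<^bsub>G1\<^esub> (p1 \<beta>)"
    using actd[OF pc xc] dp act1[OF xc] by simp
  hence "x \<otimes>\<^bsub>G1\<^esub> p1 \<beta> = p1 \<beta> \<otimes>\<^bsub>G1\<^esub> x"
    using pc xc by (metis G1.inv_solve_right' G1.m_closed)
  with e1 show ?thesis unfolding x_def by simp
qed

end
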